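(* Let $K$ be a field of characteristic zero, let $G$ be a subgroup of the additive group of $K$, and let $W_G$ be the Lie algebra with basis $\{e_\alpha : \alpha \in G\}$ and bracket $[e_\alpha, e_\beta] = (\beta-\alpha)e_{\alpha+\beta}$. Then: (a) there is no decomposition of $W_G$ as a direct sum of vector spaces $W_G = A \oplus B$ with $A, B \neq 0$, $[[A,A],B] = 0$ and $[[B,B],A] = 0$; and (b) there are no nonzero subspaces $A \subseteq B$ of $W_G$ with $\dim A + \dim B = \dim W_G$, $[[A,A],B] = 0$ and $[[B,B],A] = 0$. *)

theory Defs
  imports Complex_Main "HOL-Library.Equipollence" "HOL-Library.Function_Algebras"
begin

text \<open>The Witt-type algebra W_G is realised as the finitely supported functions
  with support in G; e_alpha is the indicator of alpha.\<close>

definition fscale :: "'k::field \<Rightarrow> ('k \<Rightarrow> 'k) \<Rightarrow> ('k \<Rightarrow> 'k)" where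
  "fscale c f = (\<lambda>x. c * f x)"

definition fsupp :: "('k::field \<Rightarrow> 'k) \<Rightarrow> 'k set" where
  "fsupp f = {x. f x \<noteq> 0}"

definition add_subgroup :: "'k::field set \<Rightarrow> bool" where
  "add_subgroup G \<longleftrightarrow> 0 \<in> G \<and> (\<forall>x\<in>G. \<forall>y\<in>G. x + y \<in> G) \<and> (\<forall>x\<in>G. - x \<in> G)"

definition WG :: "'k::field set \<Rightarrow> ('k \<Rightarrow> 'k) set" where
  "WG G = {f. finite (fsupp f) \<and> fsupp f \<subseteq> G}"

text \<open>Bilinear extension of [e_a, e_b] = (b - a) e_(a+b).\<close>
definition wbr :: "('k::field \<Rightarrow> 'k) \<Rightarrow> ('k \<Rightarrow> 'k) \<Rightarrow> ('k \<Rightarrow> 'k)" where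
  "wbr x y = (\<lambda>g. \<Sum>(a, b) \<in> {(a, b). a \<in> fsupp x \<and> b \<in> fsupp y \<and> a + b = g}.
                   (b - a) * x a * y b)"

abbreviation fspan :: "('k::field \<Rightarrow> 'k) set \<Rightarrow> ('k \<Rightarrow> 'k) set" where
  "fspan \<equiv> module.span fscale"

abbreviation fsubspace :: "('k::field \<Rightarrow> 'k) set \<Rightarrow> bool" where
  "fsubspace \<equiv> module.subspace fscale"

abbreviation findependent :: "('k::field \<Rightarrow> 'k) set \<Rightarrow> bool" where
  "findependent \<equiv> module.independent fscale"

definition brk :: "('k::field \<Rightarrow> 'k) set \<Rightarrow> ('k \<Rightarrow> 'k) set \<Rightarrow> ('k \<Rightarrow> 'k) set" where
  "brk A B = fspan {wbr a b | a b. a \<in> A \<and> b \<in> B}"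

definition is_basis_of :: "('k::field \<Rightarrow> 'k) set \<Rightarrow> ('k \<Rightarrow> 'k) set \<Rightarrow> bool" where
  "is_basis_of S V \<longleftrightarrow> S \<subseteq> V \<and> findependent S \<and> fspan S = V"

end

theory Submission
  imports Defs
begin


definition br :: "'k::field set \<Rightarrow> ('k \<Rightarrow> 'k) \<Rightarrow> ('k \<Rightarrow> 'k) \<Rightarrow> 'k \<Rightarrow> 'k" where
  "br F x y g = (\<Sum>a \<in> {a\<in>F. g - a \<in> F}. (g - a - a) * x a * y (g - a))"

lemma wbr_br:
  assumes F: "finite F" "fsupp x \<subseteq> F" "fsupp y \<subseteq> F"
  shows "wbr x y g = br F x y g"
proof -
  let ?Q = "{a. a \<in> fsupp x \<and> g - a \<in> fsupp y}"
  have P: "{(a, b). a \<in> fsupp x \<and> b \<in> fsupp y \<and> a + b = g} = (\<lambda>a. (a, g - a)) ` ?Q"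
    by (auto simp: algebra_simps image_iff)
  have inj: "inj_on (\<lambda>a. (a, g - a)) ?Q" by (auto simp: inj_on_def)
  have "wbr x y g = (\<Sum>a\<in>?Q. (g - a - a) * x a * y (g - a))"
    unfolding wbr_def P sum.reindex[OF inj] by (simp add: o_def algebra_simps)
  also have "\<dots> = br F x y g"
    unfolding br_def
    using F by (intro sum.mono_neutral_left) (auto simp: fsupp_def)
  finally show ?thesis .
qed

lemma fsupp_add: "fsupp (x + y) \<subseteq> fsupp x \<union> fsupp y"
  by (auto simp: fsupp_def)
lemma fsupp_scale: "fsupp (fscale c x) \<subseteq> fsupp x"
  by (auto simp: fsupp_def fscale_def)
lemma fsupp_minus: "fsupp (- x) = fsupp x"
  by (auto simp: fsupp_def)
lemma fsupp_diff: "fsupp (x - y) \<subseteq> fsupp x \<union> fsupp y"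
  by (auto simp: fsupp_def)

lemma br_add2: "br F x (y + z) g = br F x y g + br F x z g"
  unfolding br_def sum.distrib[symmetric] by (intro sum.cong) (auto simp: algebra_simps)
lemma br_scale2: "br F x (fscale c y) g = c * br F x y g"
  unfolding br_def by (simp add: fscale_def algebra_simps sum_distrib_left)

lemma br_anti: "br F y x g = - br F x y g"
proof -
  let ?S = "{a\<in>F. g - a \<in> F}"
  have "br F y x g = (\<Sum>a \<in> ?S. (g - (g - a) - (g - a)) * y (g - a) * x (g - (g - a)))"
    unfolding br_def
    by (rule sum.reindex_bij_witness[where i = "\<lambda>a. g - a" and j = "\<lambda>a. g - a"]) auto
  also have "\<dots> = - br F x y g"
    unfolding br_def sum_negf[symmetric] by (intro sum.cong) (auto simp: algebra_simps)
  finally show ?thesis .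
qed

lemma br_self: "br F x x g = (0::'k::field_char_0)"
  using br_anti[of F x x g] by simp

lemma finite_fsupp_wbr:
  assumes "finite (fsupp x)" "finite (fsupp y)"
  shows "finite (fsupp (wbr x y))"
proof -
  have "fsupp (wbr x y) \<subseteq> (\<lambda>(a,b). a + b) ` (fsupp x \<times> fsupp y)"
  proof
    fix g assume "g \<in> fsupp (wbr x y)"
    then have "wbr x y g \<noteq> 0" by (simp add: fsupp_def)
    then have "{(a, b). a \<in> fsupp x \<and> b \<in> fsupp y \<and> a + b = g} \<noteq> {}"
      unfolding wbr_def by (intro notI) simp
    then obtain p where "p \<in> {(a, b). a \<in> fsupp x \<and> b \<in> fsupp y \<and> a + b = g}"
      by blast
    then show "g \<in> (\<lambda>(a,b). a + b) ` (fsupp x \<times> fsupp y)" by (auto simp: image_iff)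
  qed
  then show ?thesis using assms finite_subset by blast
qed



definition qscale :: "rat \<Rightarrow> 'k::field_char_0 \<Rightarrow> 'k" where
  "qscale q x = of_rat q * x"

interpretation qvs: vector_space "qscale :: rat \<Rightarrow> 'k::field_char_0 \<Rightarrow> 'k"
  by unfold_locales (auto simp: qscale_def of_rat_add of_rat_mult algebra_simps)

lemma generic_lambda:
  fixes B :: "'a set" and D :: "('a \<Rightarrow> rat) set"
  assumes "finite B" "finite D" "\<forall>d\<in>D. \<exists>b\<in>B. d b \<noteq> 0"
  shows "\<exists>l. \<forall>d\<in>D. (\<Sum>b\<in>B. l b * d b) \<noteq> 0"
  using assms
proof (induction B arbitrary: D rule: finite_induct)
  case empty then show ?case by auto
next
  case (insert b B)
  define D' where "D' = {d\<in>D. \<exists>b'\<in>B. d b' \<noteq> 0}"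
  have "finite D'" using insert.prems(1) unfolding D'_def by simp
  moreover have "\<forall>d\<in>D'. \<exists>b'\<in>B. d b' \<noteq> 0" unfolding D'_def by blast
  ultimately obtain l where l: "\<forall>d\<in>D'. (\<Sum>b\<in>B. l b * d b) \<noteq> 0"
    using insert.IH by blast
  define bad where "bad = insert 0 ((\<lambda>d. - (\<Sum>b'\<in>B. l b' * d b') / d b) ` D)"
  have fbad: "finite bad" using insert.prems(1) unfolding bad_def by simp
  obtain s :: rat where s: "s \<notin> bad"
    using ex_new_if_finite[OF infinite_UNIV_char_0 fbad] by (elim exE)
  show ?case
  proof (intro exI ballI)
    fix d assume d: "d \<in> D"
    have eq: "(\<Sum>b'\<in>insert b B. (l(b:=s)) b' * d b') = s * d b + (\<Sum>b'\<in>B. l b' * d b')"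
    proof -
      have "(\<Sum>b'\<in>B. (l(b:=s)) b' * d b') = (\<Sum>b'\<in>B. l b' * d b')"
        using insert.hyps by (intro sum.cong) auto
      then show ?thesis using insert.hyps by simp
    qed
    show "(\<Sum>b'\<in>insert b B. (l(b:=s)) b' * d b') \<noteq> 0"
      unfolding eq
    proof (cases "d \<in> D'")
      case True
      then have ne: "(\<Sum>b'\<in>B. l b' * d b') \<noteq> 0" using l by auto
      show "s * d b + (\<Sum>b'\<in>B. l b' * d b') \<noteq> 0"
      proof (cases "d b = 0")
        case True then show ?thesis using ne by simp
      next
        case False
        have sne: "s \<noteq> - (\<Sum>b'\<in>B. l b' * d b') / d b" using s d unfolding bad_def by blast
        show ?thesis
        proof
          assume "s * d b + (\<Sum>b'\<in>B. l b' * d b') = 0"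
          then have e: "s * d b = - (\<Sum>b'\<in>B. l b' * d b')" by (simp add: eq_neg_iff_add_eq_0)
          have "s = (s * d b) / d b" using False by simp
          also have "\<dots> = - (\<Sum>b'\<in>B. l b' * d b') / d b" by (simp only: e)
          finally show False using sne by blast
        qed
      qed
    next
      case False
      then have z: "\<forall>b'\<in>B. d b' = 0" using d by (auto simp: D'_def)
      then have "d b \<noteq> 0" using insert.prems d by auto
      moreover have "s \<noteq> 0" using s unfolding bad_def by blast
      ultimately show "s * d b + (\<Sum>b'\<in>B. l b' * d b') \<noteq> 0" using z by simp
    qed
  qed
qed

lemma exists_phi:
  fixes F :: "'k::field_char_0 set"
  assumes fin: "finite F"
  shows "\<exists>\<phi>::'k\<Rightarrow>rat. inj_on \<phi> F \<and> (\<forall>a\<in>F. \<forall>b\<in>F. \<phi> (a+b) = \<phi> a + \<phi> b)"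
proof -
  obtain B :: "'k set" where B: "B \<subseteq> F" "qvs.independent B" "F \<subseteq> qvs.span B"
    by (rule qvs.maximal_independent_subset)
  have fB: "finite B" using B(1) fin finite_subset by blast
  let ?R = "qvs.representation B"
  define D where "D = (\<lambda>(u,v). (\<lambda>b. ?R u b - ?R v b)) ` {(u,v). u\<in>F \<and> v\<in>F \<and> u\<noteq>v}"
  have fD: "finite D"
  proof -
    have "{(u,v). u\<in>F \<and> v\<in>F \<and> u\<noteq>v} \<subseteq> F \<times> F" by auto
    then show ?thesis unfolding D_def using fin finite_subset by blast
  qed
  have nz: "\<forall>d\<in>D. \<exists>b\<in>B. d b \<noteq> 0"
  proof
    fix d assume "d \<in> D"
    then obtain u v where uv: "u \<in> F" "v \<in> F" "u \<noteq> v" and d: "d = (\<lambda>b. ?R u b - ?R v b)"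
      unfolding D_def by auto
    have "?R u \<noteq> ?R v"
    proof
      assume eq: "?R u = ?R v"
      have "u = (\<Sum>b | ?R u b \<noteq> 0. qscale (?R u b) b)"
        using qvs.sum_nonzero_representation_eq[OF B(2), of u] uv B(3) by auto
      also have "\<dots> = v"
        unfolding eq using qvs.sum_nonzero_representation_eq[OF B(2), of v] uv B(3) by auto
      finally show False using uv by simp
    qed
    then obtain b where "?R u b \<noteq> ?R v b" by auto
    moreover then have "b \<in> B"
      using qvs.representation_ne_zero[of B u b] qvs.representation_ne_zero[of B v b] by metis
    ultimately show "\<exists>b\<in>B. d b \<noteq> 0" unfolding d by auto
  qed
  obtain l where l: "\<forall>d\<in>D. (\<Sum>b\<in>B. l b * d b) \<noteq> 0"
    using generic_lambda[OF fB fD nz] by blast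
  define \<phi> where "\<phi> v = (\<Sum>b\<in>B. l b * ?R v b)" for v
  have add: "\<forall>a\<in>F. \<forall>b\<in>F. \<phi> (a+b) = \<phi> a + \<phi> b"
  proof (intro ballI)
    fix a c assume "a \<in> F" "c \<in> F"
    then have "?R (a + c) = (\<lambda>b. ?R a b + ?R c b)"
      using qvs.representation_add[OF B(2)] B(3) by blast
    then show "\<phi> (a+c) = \<phi> a + \<phi> c"
      unfolding \<phi>_def by (simp add: algebra_simps sum.distrib)
  qed
  have inj: "inj_on \<phi> F"
  proof (rule inj_onI, rule ccontr)
    fix u v assume uv: "u \<in> F" "v \<in> F" "\<phi> u = \<phi> v" "u \<noteq> v"
    then have "(\<lambda>b. ?R u b - ?R v b) \<in> D" unfolding D_def by auto
    then have "(\<Sum>b\<in>B. l b * (?R u b - ?R v b)) \<noteq> 0" by (rule l[THEN bspec])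
    moreover have "(\<Sum>b\<in>B. l b * (?R u b - ?R v b)) = \<phi> u - \<phi> v"
      unfolding \<phi>_def by (simp add: algebra_simps sum_subtractf)
    ultimately show False using uv by simp
  qed
  show ?thesis using inj add by blast
qed



lemma ex_max_rat:
  fixes \<phi> :: "'a \<Rightarrow> rat"
  assumes "finite S" "S \<noteq> {}"
  shows "\<exists>m\<in>S. \<forall>a\<in>S. \<phi> a \<le> \<phi> m"
proof -
  have "Max (\<phi> ` S) \<in> \<phi> ` S" using assms by (intro Max_in) auto
  then obtain m where m: "m \<in> S" "\<phi> m = Max (\<phi> ` S)" by auto
  have "\<forall>a\<in>S. \<phi> a \<le> \<phi> m" unfolding m(2) using assms(1) by (intro ballI Max_ge) auto
  then show ?thesis using m(1) by blast
qed

lemma top_eq: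
  fixes x y :: "'k::field_char_0 \<Rightarrow> 'k" and \<phi> :: "'k \<Rightarrow> rat"
  assumes F: "finite F" "fsupp x \<subseteq> F" "fsupp y \<subseteq> F"
    and inj: "inj_on \<phi> F" and add: "\<forall>a\<in>F. \<forall>b\<in>F. \<phi> (a+b) = \<phi> a + \<phi> b"
    and w: "wbr x y = 0"
    and a0: "a0 \<in> fsupp x" "\<forall>a\<in>fsupp x. \<phi> a \<le> \<phi> a0"
    and b0: "b0 \<in> fsupp y" "\<forall>b\<in>fsupp y. \<phi> b \<le> \<phi> b0"
  shows "a0 = b0"
proof (rule ccontr)
  assume ne: "a0 \<noteq> b0"
  define g where "g = a0 + b0"
  let ?S = "{a\<in>F. g - a \<in> F}"
  let ?t = "\<lambda>a. (g - a - a) * x a * y (g - a)"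
  have a0S: "a0 \<in> ?S" using a0 b0 F by (auto simp: g_def)
  have fS: "finite ?S" using F by simp
  have rest: "\<forall>a\<in>?S - {a0}. ?t a = 0"
  proof
    fix a assume a: "a \<in> ?S - {a0}"
    show "?t a = 0"
    proof (rule ccontr)
      assume "?t a \<noteq> 0"
      then have xa: "a \<in> fsupp x" and ya: "g - a \<in> fsupp y" by (auto simp: fsupp_def)
      have "\<phi> a \<le> \<phi> a0" using a0 xa by blast
      moreover have "\<phi> (g - a) \<le> \<phi> b0" using b0 ya by blast
      moreover have "\<phi> a + \<phi> (g - a) = \<phi> a0 + \<phi> b0"
      proof -
        have "\<phi> (a + (g - a)) = \<phi> a + \<phi> (g - a)" using add xa ya F by blast
        moreover have "\<phi> (a0 + b0) = \<phi> a0 + \<phi> b0" using add a0 b0 F by blast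
        ultimately show ?thesis by (simp add: g_def)
      qed
      ultimately have "\<phi> a = \<phi> a0" by linarith
      then have "a = a0" using inj xa a0 F by (meson inj_onD subsetD)
      then show False using a by blast
    qed
  qed
  have "0 = wbr x y g" using w by simp
  also have "\<dots> = br F x y g" using F by (rule wbr_br)
  also have "\<dots> = ?t a0 + (\<Sum>a\<in>?S - {a0}. ?t a)"
    unfolding br_def using fS a0S by (rule sum.remove)
  also have "\<dots> = ?t a0" using sum.neutral[OF rest] by simp
  also have "\<dots> = (b0 - a0) * x a0 * y b0" by (simp add: g_def)
  finally have "(b0 - a0) * x a0 * y b0 = 0" by simp
  then show False using ne a0(1) b0(1) by (auto simp: fsupp_def)
qed

lemma centralizer:
  fixes x y :: "'k::field_char_0 \<Rightarrow> 'k"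
  assumes fx: "finite (fsupp x)" and fy: "finite (fsupp y)" and x0: "x \<noteq> 0" and w: "wbr x y = 0"
  shows "\<exists>c. y = fscale c x"
proof -
  define F where "F = fsupp x \<union> fsupp y"
  have fF: "finite F" using fx fy by (simp add: F_def)
  obtain \<phi> :: "'k \<Rightarrow> rat" where inj: "inj_on \<phi> F" and add: "\<forall>a\<in>F. \<forall>b\<in>F. \<phi> (a+b) = \<phi> a + \<phi> b"
    using exists_phi[OF fF] by blast
  have "fsupp x \<noteq> {}" using x0 by (auto simp: fsupp_def fun_eq_iff)
  then obtain a0 where a0: "a0 \<in> fsupp x" "\<forall>a\<in>fsupp x. \<phi> a \<le> \<phi> a0"
    using ex_max_rat[OF fx] by blast
  define c where "c = y a0 / x a0"
  define y' where "y' = y + fscale (- c) x"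
  have sy': "fsupp y' \<subseteq> F" unfolding y'_def F_def using fsupp_add[of y "fscale (- c) x"] fsupp_scale[of "-c" x] by blast
  have w': "wbr x y' = 0"
  proof
    fix g
    have "wbr x y' g = br F x y' g" using fF sy' by (intro wbr_br) (auto simp: F_def)
    also have "\<dots> = br F x y g + (- c) * br F x x g" unfolding y'_def by (simp add: br_add2 br_scale2)
    also have "\<dots> = wbr x y g" using fF by (simp add: br_self wbr_br[symmetric] F_def)
    finally show "wbr x y' g = 0 g" using w by simp
  qed
  have "y' a0 = 0" using a0(1) by (simp add: y'_def c_def fscale_def fsupp_def)
  have "y' = 0"
  proof (rule ccontr)
    assume "y' \<noteq> 0"
    then have "fsupp y' \<noteq> {}" by (auto simp: fsupp_def fun_eq_iff)
    moreover have "finite (fsupp y')" using sy' fF finite_subset by blast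
    ultimately obtain b1 where b1: "b1 \<in> fsupp y'" "\<forall>b\<in>fsupp y'. \<phi> b \<le> \<phi> b1"
      using ex_max_rat by blast
    have "a0 = b1" by (rule top_eq[OF fF _ sy' inj add w' a0 b1]) (auto simp: F_def)
    then show False using b1(1) \<open>y' a0 = 0\<close> by (simp add: fsupp_def)
  qed
  then have "y = fscale c x" unfolding y'_def by (auto simp: fscale_def fun_eq_iff algebra_simps)
  then show ?thesis by blast
qed



interpretation fvs: vector_space "fscale :: 'k::field \<Rightarrow> ('k \<Rightarrow> 'k) \<Rightarrow> ('k \<Rightarrow> 'k)"
  by unfold_locales (auto simp: fscale_def fun_eq_iff algebra_simps)

lemma wbr_anti_fun:
  assumes "finite (fsupp x)" "finite (fsupp y)"
  shows "wbr y x = - wbr x (y :: 'k::field_char_0 \<Rightarrow> 'k)"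
proof
  fix g
  let ?F = "fsupp x \<union> fsupp y"
  have "wbr y x g = br ?F y x g" using assms by (intro wbr_br) auto
  also have "\<dots> = - br ?F x y g" by (rule br_anti)
  also have "\<dots> = - wbr x y g" using assms by (subst wbr_br[of ?F x y]) auto
  finally show "wbr y x g = (- wbr x y) g" by simp
qed

lemma wbr_lin2:
  assumes "finite (fsupp x)" "finite (fsupp y)" "finite (fsupp z)"
  shows "wbr x (fscale p y + fscale q z) = fscale p (wbr x y) + fscale q (wbr x (z :: 'k::field_char_0 \<Rightarrow> 'k))"
proof
  fix g
  let ?F = "fsupp x \<union> fsupp y \<union> fsupp z"
  have s: "fsupp (fscale p y + fscale q z) \<subseteq> ?F"
    using fsupp_add[of "fscale p y" "fscale q z"] fsupp_scale[of p y] fsupp_scale[of q z] by blast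
  have "wbr x (fscale p y + fscale q z) g = br ?F x (fscale p y + fscale q z) g"
    using assms s by (intro wbr_br) auto
  also have "\<dots> = p * br ?F x y g + q * br ?F x z g" by (simp add: br_add2 br_scale2)
  also have "\<dots> = p * wbr x y g + q * wbr x z g"
  proof -
    have "wbr x y g = br ?F x y g" using assms by (intro wbr_br) auto
    moreover have "wbr x z g = br ?F x z g" using assms by (intro wbr_br) auto
    ultimately show ?thesis by simp
  qed
  finally show "wbr x (fscale p y + fscale q z) g = (fscale p (wbr x y) + fscale q (wbr x z)) g"
    by (simp add: fscale_def)
qed

definition indep3 :: "('k::field \<Rightarrow> 'k) \<Rightarrow> ('k \<Rightarrow> 'k) \<Rightarrow> ('k \<Rightarrow> 'k) \<Rightarrow> bool" where
  "indep3 x y z \<longleftrightarrow> (\<forall>p q r. fscale p x + fscale q y + fscale r z = 0 \<longrightarrow> p = 0 \<and> q = 0 \<and> r = 0)"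

lemma no_indep3:
  fixes b x y z :: "'k::field_char_0 \<Rightarrow> 'k"
  assumes fb: "finite (fsupp b)" and b0: "b \<noteq> 0"
    and fx: "finite (fsupp x)" and fy: "finite (fsupp y)" and fz: "finite (fsupp z)"
    and wy: "wbr (wbr x y) b = 0" and wz: "wbr (wbr x z) b = 0"
    and ind: "indep3 x y z"
  shows False
proof -
  have fu: "finite (fsupp (wbr x y))" using fx fy by (rule finite_fsupp_wbr)
  have fv: "finite (fsupp (wbr x z))" using fx fz by (rule finite_fsupp_wbr)
  have "wbr b (wbr x y) = 0" using wbr_anti_fun[OF fu fb] wy by simp
  then obtain c1 where c1: "wbr x y = fscale c1 b" using centralizer[OF fb fu b0] by blast
  have "wbr b (wbr x z) = 0" using wbr_anti_fun[OF fv fb] wz by simp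
  then obtain c2 where c2: "wbr x z = fscale c2 b" using centralizer[OF fb fv b0] by blast
  have x0: "x \<noteq> 0"
  proof
    assume "x = 0"
    then have "fscale 1 x + fscale 0 y + fscale 0 z = 0" by (simp add: fscale_def fun_eq_iff)
    then show False using ind unfolding indep3_def by (metis one_neq_zero)
  qed
  have c1ne: "c1 \<noteq> 0"
  proof
    assume "c1 = 0"
    then have "wbr x y = 0" using c1 by (simp add: fscale_def fun_eq_iff)
    then obtain c where "y = fscale c x" using centralizer[OF fx fy x0] by blast
    then have "fscale c x + fscale (-1) y + fscale 0 z = 0" by (simp add: fscale_def fun_eq_iff)
    then show False using ind unfolding indep3_def by fastforce
  qed
  define w where "w = fscale c2 y + fscale (- c1) z"
  have fw: "finite (fsupp w)" unfolding w_def
    using fsupp_add[of "fscale c2 y" "fscale (- c1) z"] fsupp_scale[of c2 y] fsupp_scale[of "-c1" z] fy fz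
    by (meson finite_Un finite_subset)
  have "wbr x w = fscale c2 (wbr x y) + fscale (- c1) (wbr x z)" unfolding w_def by (rule wbr_lin2[OF fx fy fz])
  also have "\<dots> = 0" unfolding c1 c2 by (simp add: fscale_def fun_eq_iff algebra_simps)
  finally obtain c where "w = fscale c x" using centralizer[OF fx fw x0] by blast
  then have "fscale (- c) x + fscale c2 y + fscale (- c1) z = 0"
    unfolding w_def by (simp add: fscale_def fun_eq_iff algebra_simps)
  then show False using ind c1ne unfolding indep3_def by fastforce
qed

lemma indep3_of_independent:
  assumes ind: "findependent (I :: ('k::field \<Rightarrow> 'k) set)" and xyz: "x \<in> I" "y \<in> I" "z \<in> I"
    and d: "x \<noteq> y" "y \<noteq> z" "x \<noteq> z"
  shows "indep3 x y z"
  unfolding indep3_def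
proof (intro allI impI)
  fix p q r assume eq: "fscale p x + fscale q y + fscale r z = 0"
  define u where "u v = (if v = x then p else if v = y then q else r)" for v
  have sum: "(\<Sum>v\<in>{x,y,z}. fscale (u v) v) = 0"
    using d eq by (simp add: u_def algebra_simps)
  have sub: "{x,y,z} \<subseteq> I" using xyz by auto
  have "u x = 0" by (rule fvs.independentD[OF ind _ sub sum]) auto
  moreover have "u y = 0" by (rule fvs.independentD[OF ind _ sub sum]) auto
  moreover have "u z = 0" by (rule fvs.independentD[OF ind _ sub sum]) auto
  ultimately show "p = 0 \<and> q = 0 \<and> r = 0" using d by (simp add: u_def)
qed

lemma card_le2:
  fixes b :: "'k::field_char_0 \<Rightarrow> 'k"
  assumes fb: "finite (fsupp b)" and b0: "b \<noteq> 0"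
    and fS: "\<forall>x\<in>S. finite (fsupp x)"
    and wS: "\<forall>x\<in>S. \<forall>y\<in>S. wbr (wbr x y) b = 0"
    and IS: "I \<subseteq> S" and ind: "findependent I"
  shows "finite I \<and> card I \<le> 2"
proof (rule ccontr)
  assume "\<not> (finite I \<and> card I \<le> 2)"
  then obtain T where T: "T \<subseteq> I" "card T = 3"
  proof (cases "finite I")
    case True
    then have "3 \<le> card I" using \<open>\<not> (finite I \<and> card I \<le> 2)\<close> by simp
    then show ?thesis using that obtain_subset_with_card_n by metis
  next
    case False
    then show ?thesis using that infinite_arbitrarily_large by metis
  qed
  then obtain x y z where xyz: "T = {x,y,z}" "x \<noteq> y" "y \<noteq> z" "x \<noteq> z" by (auto simp: card_3_iff)
  have in3: "x \<in> I" "y \<in> I" "z \<in> I" using xyz T by auto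
  have "indep3 x y z" by (rule indep3_of_independent[OF ind in3 xyz(2-4)])
  moreover have "x \<in> S" "y \<in> S" "z \<in> S" using in3 IS by auto
  ultimately show False using no_indep3[OF fb b0] fS wS by blast
qed



definition ee :: "'k::field \<Rightarrow> 'k \<Rightarrow> 'k" where
  "ee \<alpha> = (\<lambda>x. if x = \<alpha> then 1 else 0)"

lemma fsupp_ee: "fsupp (ee \<alpha>) = {\<alpha>}" by (auto simp: fsupp_def ee_def)

lemma ee_in_WG: "\<alpha> \<in> G \<Longrightarrow> ee \<alpha> \<in> WG G" by (simp add: WG_def fsupp_ee)

lemma inj_ee: "inj ee" by (auto simp: inj_on_def ee_def fun_eq_iff)

lemma WG_fin: "f \<in> WG G \<Longrightarrow> finite (fsupp f)" by (simp add: WG_def)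

lemma sum_fun_apply: "(\<Sum>w\<in>t. f w) x = (\<Sum>w\<in>t. f w x)"
  by (induction t rule: infinite_finite_induct) (auto simp: zero_fun_def plus_fun_def)

lemma indep_ee: "findependent (ee ` (S :: 'k::field set))"
  unfolding fvs.independent_explicit_module
proof (intro allI impI)
  fix t u v assume t: "finite t" "t \<subseteq> ee ` S" "(\<Sum>v\<in>t. fscale (u v) v) = 0" "v \<in> t"
  then obtain \<alpha> where v: "v = ee \<alpha>" by auto
  have "0 = (\<Sum>w\<in>t. fscale (u w) w) \<alpha>" using t(3) by simp
  also have "\<dots> = (\<Sum>w\<in>t. u w * w \<alpha>)" by (simp add: fscale_def sum_fun_apply)
  also have "\<dots> = u v * v \<alpha> + (\<Sum>w\<in>t - {v}. u w * w \<alpha>)" using t by (simp add: sum.remove)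
  also have "(\<Sum>w\<in>t - {v}. u w * w \<alpha>) = 0"
  proof (rule sum.neutral, rule ballI)
    fix w assume w: "w \<in> t - {v}"
    then obtain \<beta> where "w = ee \<beta>" using t by auto
    then have "w \<alpha> = 0" using w v by (auto simp: ee_def)
    then show "u w * w \<alpha> = 0" by simp
  qed
  finally show "u v = 0" by (simp add: v ee_def)
qed

lemma G_infinite:
  fixes G :: "'k::field_char_0 set"
  assumes G: "add_subgroup G" and g: "g \<in> G" "g \<noteq> 0"
  shows "infinite G"
proof -
  have "of_nat n * g \<in> G" for n
  proof (induction n)
    case 0 then show ?case using G by (simp add: add_subgroup_def)
  next
    case (Suc n)
    then have "of_nat n * g + g \<in> G" using G g by (simp add: add_subgroup_def)
    then show ?case by (simp add: algebra_simps)
  qed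
  then have "range (\<lambda>n. of_nat n * g) \<subseteq> G" by auto
  moreover have "inj (\<lambda>n::nat. of_nat n * g)" using g by (auto simp: inj_on_def)
  ultimately show ?thesis using range_inj_infinite infinite_super by blast
qed

lemma WG0: "f \<in> WG {0} \<Longrightarrow> f = fscale (f 0) (ee 0)"
  by (auto simp: WG_def fsupp_def fscale_def ee_def fun_eq_iff)

lemma brk2:
  assumes "brk (brk A A) B = {0}" "x \<in> A" "y \<in> A" "b \<in> B"
  shows "wbr (wbr x y) b = 0"
proof -
  have "wbr x y \<in> brk A A" unfolding brk_def using assms by (intro fvs.span_base) blast
  then have "wbr (wbr x y) b \<in> brk (brk A A) B" unfolding brk_def using assms by (intro fvs.span_base) blast
  then show ?thesis using assms by simp
qed

lemma nonzero_elem: "fsubspace A \<Longrightarrow> A \<noteq> {0} \<Longrightarrow> \<exists>a\<in>A. a \<noteq> 0"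
  using fvs.subspace_0 by blast

lemma aux_prop: "p \<noteq> 0 \<Longrightarrow> a = fscale p e \<Longrightarrow> b = fscale q e \<Longrightarrow> b = fscale (q / p) (a :: 'k::field \<Rightarrow> 'k)"
  by (simp add: fscale_def fun_eq_iff)

theorem proposition3p2:
  fixes G :: "'k::field_char_0 set"
  assumes "add_subgroup G"
  shows "(\<not> (\<exists>A B. fsubspace A \<and> fsubspace B \<and> A \<subseteq> WG G \<and> B \<subseteq> WG G
              \<and> A \<inter> B = {0} \<and> {a + b | a b. a \<in> A \<and> b \<in> B} = WG G
              \<and> A \<noteq> {0} \<and> B \<noteq> {0}
              \<and> brk (brk A A) B = {0} \<and> brk (brk B B) A = {0}))
       \<and> \<not> (\<exists>A B. fsubspace A \<and> fsubspace B \<and> A \<subseteq> B \<and> B \<subseteq> WG G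
              \<and> A \<noteq> {0} \<and> B \<noteq> {0}
              \<and> (\<exists>BA BB BW. is_basis_of BA A \<and> is_basis_of BB B \<and> is_basis_of BW (WG G)
                   \<and> BA <+> BB \<approx> BW)
              \<and> brk (brk A A) B = {0} \<and> brk (brk B B) A = {0})"
proof (intro conjI notI)
  assume "\<exists>A B. fsubspace A \<and> fsubspace B \<and> A \<subseteq> WG G \<and> B \<subseteq> WG G
              \<and> A \<inter> B = {0} \<and> {a + b | a b. a \<in> A \<and> b \<in> B} = WG G
              \<and> A \<noteq> {0} \<and> B \<noteq> {0}
              \<and> brk (brk A A) B = {0} \<and> brk (brk B B) A = {0}"
  then obtain A B where sA: "fsubspace A" and sB: "fsubspace B" and AW: "A \<subseteq> WG G" and BW: "B \<subseteq> WG G"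
    and AB: "A \<inter> B = {0}" and sum: "{a + b | a b. a \<in> A \<and> b \<in> B} = WG G"
    and A0: "A \<noteq> {0}" and B0: "B \<noteq> {0}"
    and bA: "brk (brk A A) B = {0}" and bB: "brk (brk B B) A = {0}"
    by (elim exE conjE) (rule that, assumption+)
  obtain a where a: "a \<in> A" "a \<noteq> 0" using nonzero_elem[OF sA A0] by blast
  obtain b where b: "b \<in> B" "b \<noteq> 0" using nonzero_elem[OF sB B0] by blast
  show False
  proof (cases "G = {0}")
    case True
    have ea: "a = fscale (a 0) (ee 0)" using WG0 a AW True by blast
    have eb: "b = fscale (b 0) (ee 0)" using WG0 b BW True by blast
    have "a 0 \<noteq> 0"
    proof
      assume h: "a 0 = 0"
      have "a = fscale (a 0) (ee 0)" by (rule ea)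
      also have "\<dots> = 0" unfolding h by (simp add: fscale_def fun_eq_iff)
      finally show False using a(2) by simp
    qed
    then have "b = fscale (b 0 / a 0) a" using ea eb by (rule aux_prop)
    then have "b \<in> A" by (subst (asm) (1) eq_commute) (erule subst, rule fvs.subspace_scale[OF sA a(1)])
    then show False using AB b by blast
  next
    case False
    then obtain g where g: "g \<in> G" "g \<noteq> 0" using assms unfolding add_subgroup_def by blast
    have infG: "infinite G" by (rule G_infinite[OF assms g])
    obtain BA where BA: "BA \<subseteq> A" "findependent BA" "A \<subseteq> fspan BA"
      by (rule fvs.maximal_independent_subset)
    obtain BB where BB: "BB \<subseteq> B" "findependent BB" "B \<subseteq> fspan BB"
      by (rule fvs.maximal_independent_subset)
    have fb: "finite (fsupp b)" using b BW WG_fin by blast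
    have fa: "finite (fsupp a)" using a AW WG_fin by blast
    have fSA: "\<forall>x\<in>A. finite (fsupp x)" using AW WG_fin by blast
    have fSB: "\<forall>x\<in>B. finite (fsupp x)" using BW WG_fin by blast
    have wSA: "\<forall>x\<in>A. \<forall>y\<in>A. wbr (wbr x y) b = 0" using brk2[OF bA _ _ b(1)] by blast
    have wSB: "\<forall>x\<in>B. \<forall>y\<in>B. wbr (wbr x y) a = 0" using brk2[OF bB _ _ a(1)] by blast
    have fBA: "finite BA" using card_le2[OF fb b(2) fSA wSA BA(1) BA(2)] by simp
    have fBB: "finite BB" using card_le2[OF fa a(2) fSB wSB BB(1) BB(2)] by simp
    have "WG G \<subseteq> fspan (BA \<union> BB)"
    proof
      fix f assume "f \<in> WG G"
      then have "f \<in> {a + b | a b. a \<in> A \<and> b \<in> B}" by (simp only: sum)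
      then obtain x y where xy: "f = x + y" "x \<in> A" "y \<in> B" by blast
      have "x \<in> fspan (BA \<union> BB)" using xy BA(3) fvs.span_mono[of BA "BA \<union> BB"] by blast
      moreover have "y \<in> fspan (BA \<union> BB)" using xy BB(3) fvs.span_mono[of BB "BA \<union> BB"] by blast
      ultimately show "f \<in> fspan (BA \<union> BB)" using xy(1) fvs.span_add by blast
    qed
    then have "ee ` G \<subseteq> fspan (BA \<union> BB)" using ee_in_WG by blast
    then have "finite (ee ` G)" using fvs.independent_span_bound[of "BA \<union> BB" "ee ` G"] fBA fBB indep_ee by blast
    then have "finite G" by (rule finite_imageD) (rule inj_on_subset[OF inj_ee subset_UNIV])
    then show False using infG by simp
  qed
next
  assume "\<exists>A B. fsubspace A \<and> fsubspace B \<and> A \<subseteq> B \<and> B \<subseteq> WG G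
              \<and> A \<noteq> {0} \<and> B \<noteq> {0}
              \<and> (\<exists>BA BB BW. is_basis_of BA A \<and> is_basis_of BB B \<and> is_basis_of BW (WG G)
                   \<and> BA <+> BB \<approx> BW)
              \<and> brk (brk A A) B = {0} \<and> brk (brk B B) A = {0}"
  then obtain A B BA BB BW where sA: "fsubspace A" and sB: "fsubspace B" and AB: "A \<subseteq> B" and BW: "B \<subseteq> WG G"
    and A0: "A \<noteq> {0}" and B0: "B \<noteq> {0}"
    and iA: "is_basis_of BA A" and iB: "is_basis_of BB B" and iW: "is_basis_of BW (WG G)"
    and eq: "BA <+> BB \<approx> BW"
    and bB: "brk (brk B B) A = {0}"
    by (elim exE conjE) (rule that, assumption+)
  obtain a where a: "a \<in> A" "a \<noteq> 0" using nonzero_elem[OF sA A0] by blast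
  have fa: "finite (fsupp a)" using a AB BW WG_fin by blast
  have fSB: "\<forall>x\<in>B. finite (fsupp x)" using BW WG_fin by blast
  have wSB: "\<forall>x\<in>B. \<forall>y\<in>B. wbr (wbr x y) a = 0" using brk2[OF bB _ _ a(1)] by blast
  have iB1: "BB \<subseteq> B" and iB2: "findependent BB" using iB unfolding is_basis_of_def by auto
  have fBB: "finite BB" using card_le2[OF fa a(2) fSB wSB iB1 iB2] by simp
  have "BA \<subseteq> fspan BB" using iA iB AB unfolding is_basis_of_def by blast
  then have fBA: "finite BA" using fvs.independent_span_bound[OF fBB] iA unfolding is_basis_of_def by blast
  have fBW: "finite BW" using eqpoll_finite_iff[OF eq] fBA fBB by simp
  show False
  proof (cases "G = {0}")
    case True
    have "BW \<subseteq> fspan {ee 0}"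
    proof
      fix f assume "f \<in> BW"
      then have "f \<in> WG G" using iW unfolding is_basis_of_def by blast
      then have feq: "f = fscale (f 0) (ee 0)" using WG0 True by blast
      show "f \<in> fspan {ee 0}" by (subst feq) (rule fvs.span_scale, rule fvs.span_base, simp)
    qed
    then have "card BW \<le> 1" using fvs.independent_span_bound[of "{ee 0}" BW] iW
      unfolding is_basis_of_def by simp
    moreover have "BA \<noteq> {}" using iA A0 unfolding is_basis_of_def by auto
    moreover have "BB \<noteq> {}" using iB B0 unfolding is_basis_of_def by auto
    moreover have "card BW = card BA + card BB"
      using eqpoll_iff_card[of "BA <+> BB" BW] eq fBA fBB fBW card_Plus[OF fBA fBB] by simp
    moreover have "card BA > 0" using fBA \<open>BA \<noteq> {}\<close> by (simp add: card_gt_0_iff)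
    moreover have "card BB > 0" using fBB \<open>BB \<noteq> {}\<close> by (simp add: card_gt_0_iff)
    ultimately show False by linarith
  next
    case False
    then obtain g where g: "g \<in> G" "g \<noteq> 0" using assms unfolding add_subgroup_def by blast
    have infG: "infinite G" by (rule G_infinite[OF assms g])
    have "ee ` G \<subseteq> fspan BW" using ee_in_WG iW unfolding is_basis_of_def by blast
    then have "finite (ee ` G)" using fvs.independent_span_bound[OF fBW] indep_ee by blast
    then have "finite G" by (rule finite_imageD) (rule inj_on_subset[OF inj_ee subset_UNIV])
    then show False using infG by simp
  qed
qed


end
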